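(* Let $n<\omega$ and let $\mathcal{K}$ be a class of simple algebras of $\mathbf{M}_n$ such that the variety $\mathbf{V}(\mathcal{K})$ generated by $\mathcal{K}$ is locally finite. Then every finite simple algebra in $\mathbf{V}(\mathcal{K})$ is isomorphic to a subalgebra of a member of $\mathcal{K}$.
   Context: $\mathbf{M}_n$ is the variety of pseudocomplemented de Morgan algebras $(L;\wedge,\vee,{}^\ast,{}^\prime,0,1)$ (bounded distributive lattice, pseudocomplement ${}^\ast$, de Morgan involution ${}^\prime$) satisfying $x\wedge x^{\prime\ast\prime}\le y\vee y^\ast$ and $(x\wedge x^{\prime\ast})^{n(\prime\ast)}=(x\wedge x^{\prime\ast})^{(n+1)(\prime\ast)}$, where $x^{0(\prime\ast)}=x$, $x^{(k+1)(\prime\ast)}=((x^{k(\prime\ast)})')^\ast$. Simple algebras are non-trivial. *)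

theory Defs
  imports Main
begin

text \<open>Algebras of the signature (meet, join, pseudocomplement, de Morgan negation, 0, 1),
  given by a carrier set and total operations (only their behaviour on the carrier matters).\<close>

record 'a pdm =
  carrier :: "'a set"
  meet :: "'a \<Rightarrow> 'a \<Rightarrow> 'a"
  join :: "'a \<Rightarrow> 'a \<Rightarrow> 'a"
  pc :: "'a \<Rightarrow> 'a"
  neg :: "'a \<Rightarrow> 'a"
  bot :: 'a
  top :: 'a

definition is_alg :: "('a, 'm) pdm_scheme \<Rightarrow> bool" where
  "is_alg A \<longleftrightarrow> bot A \<in> carrier A \<and> top A \<in> carrier A \<and>
     (\<forall>x\<in>carrier A. \<forall>y\<in>carrier A. meet A x y \<in> carrier A \<and> join A x y \<in> carrier A) \<and>
     (\<forall>x\<in>carrier A. pc A x \<in> carrier A \<and> neg A x \<in> carrier A)"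

definition le :: "('a, 'm) pdm_scheme \<Rightarrow> 'a \<Rightarrow> 'a \<Rightarrow> bool" where
  "le A x y \<longleftrightarrow> meet A x y = x"

definition iter_ns :: "('a, 'm) pdm_scheme \<Rightarrow> nat \<Rightarrow> 'a \<Rightarrow> 'a" where
  "iter_ns A k x = ((\<lambda>z. pc A (neg A z)) ^^ k) x"

definition M :: "nat \<Rightarrow> ('a, 'm) pdm_scheme \<Rightarrow> bool" where
  "M n A \<longleftrightarrow> is_alg A \<and>
    (\<forall>x\<in>carrier A. \<forall>y\<in>carrier A. \<forall>z\<in>carrier A.
        meet A (meet A x y) z = meet A x (meet A y z) \<and>
        join A (join A x y) z = join A x (join A y z) \<and>
        meet A x y = meet A y x \<and> join A x y = join A y x \<and>
        meet A x (join A x y) = x \<and> join A x (meet A x y) = x \<and>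
        meet A x (join A y z) = join A (meet A x y) (meet A x z)) \<and>
    (\<forall>x\<in>carrier A. meet A (bot A) x = bot A \<and> meet A (top A) x = x) \<and>
    (\<forall>x\<in>carrier A. \<forall>y\<in>carrier A. meet A x y = bot A \<longleftrightarrow> le A y (pc A x)) \<and>
    (\<forall>x\<in>carrier A. \<forall>y\<in>carrier A.
        neg A (neg A x) = x \<and>
        neg A (join A x y) = meet A (neg A x) (neg A y) \<and>
        neg A (meet A x y) = join A (neg A x) (neg A y)) \<and>
    neg A (bot A) = top A \<and>
    (\<forall>x\<in>carrier A. \<forall>y\<in>carrier A.
        le A (meet A x (neg A (pc A (neg A x)))) (join A y (pc A y))) \<and>
    (\<forall>x\<in>carrier A.
        iter_ns A n (meet A x (pc A (neg A x))) = iter_ns A (Suc n) (meet A x (pc A (neg A x))))"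

definition congruence :: "('a, 'm) pdm_scheme \<Rightarrow> ('a \<times> 'a) set \<Rightarrow> bool" where
  "congruence A \<theta> \<longleftrightarrow> equiv (carrier A) \<theta> \<and>
    (\<forall>x y u v. (x, y) \<in> \<theta> \<longrightarrow> (u, v) \<in> \<theta> \<longrightarrow>
        (meet A x u, meet A y v) \<in> \<theta> \<and> (join A x u, join A y v) \<in> \<theta>) \<and>
    (\<forall>x y. (x, y) \<in> \<theta> \<longrightarrow> (pc A x, pc A y) \<in> \<theta> \<and> (neg A x, neg A y) \<in> \<theta>)"

definition simple :: "('a, 'm) pdm_scheme \<Rightarrow> bool" where
  "simple A \<longleftrightarrow> is_alg A \<and> (\<exists>x\<in>carrier A. \<exists>y\<in>carrier A. x \<noteq> y) \<and>
     {\<theta>. congruence A \<theta>} = {Id_on (carrier A), carrier A \<times> carrier A}"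

datatype tm = Var nat | Bot | Top | Mt tm tm | Jn tm tm | Pc tm | Ng tm

fun eval :: "('a, 'm) pdm_scheme \<Rightarrow> (nat \<Rightarrow> 'a) \<Rightarrow> tm \<Rightarrow> 'a" where
  "eval A \<sigma> (Var i) = \<sigma> i"
| "eval A \<sigma> Bot = bot A"
| "eval A \<sigma> Top = top A"
| "eval A \<sigma> (Mt s t) = meet A (eval A \<sigma> s) (eval A \<sigma> t)"
| "eval A \<sigma> (Jn s t) = join A (eval A \<sigma> s) (eval A \<sigma> t)"
| "eval A \<sigma> (Pc s) = pc A (eval A \<sigma> s)"
| "eval A \<sigma> (Ng s) = neg A (eval A \<sigma> s)"

definition sat :: "('a, 'm) pdm_scheme \<Rightarrow> tm \<Rightarrow> tm \<Rightarrow> bool" where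
  "sat A s t \<longleftrightarrow> (\<forall>\<sigma>. (\<forall>i. \<sigma> i \<in> carrier A) \<longrightarrow> eval A \<sigma> s = eval A \<sigma> t)"

text \<open>Membership in the variety V(K) generated by K (= Mod Id K, Birkhoff).\<close>
definition in_V :: "'a pdm set \<Rightarrow> 'b pdm \<Rightarrow> bool" where
  "in_V K B \<longleftrightarrow> is_alg B \<and> (\<forall>s t. (\<forall>A\<in>K. sat A s t) \<longrightarrow> sat B s t)"

inductive_set Sg :: "('a, 'm) pdm_scheme \<Rightarrow> 'a set \<Rightarrow> 'a set" for A X where
  gen: "x \<in> X \<Longrightarrow> x \<in> Sg A X"
| bot: "bot A \<in> Sg A X"
| top: "top A \<in> Sg A X"
| meet: "x \<in> Sg A X \<Longrightarrow> y \<in> Sg A X \<Longrightarrow> meet A x y \<in> Sg A X"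
| join: "x \<in> Sg A X \<Longrightarrow> y \<in> Sg A X \<Longrightarrow> join A x y \<in> Sg A X"
| pc: "x \<in> Sg A X \<Longrightarrow> pc A x \<in> Sg A X"
| neg: "x \<in> Sg A X \<Longrightarrow> neg A x \<in> Sg A X"

text \<open>V(K) is locally finite: every finitely generated member is finite. Finitely generated
  algebras are countable, so it suffices (equivalently) to range over algebras carried by nat.\<close>
definition locally_finite :: "'a pdm set \<Rightarrow> bool" where
  "locally_finite K \<longleftrightarrow> (\<forall>B :: nat pdm. in_V K B \<longrightarrow>
     (\<forall>X. finite X \<and> X \<subseteq> carrier B \<and> Sg B X = carrier B \<longrightarrow> finite (carrier B)))"

definition subalg :: "'a pdm \<Rightarrow> 'a pdm \<Rightarrow> bool" where
  "subalg S A \<longleftrightarrow> is_alg S \<and> carrier S \<subseteq> carrier A \<and>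
     bot S = bot A \<and> top S = top A \<and>
     (\<forall>x\<in>carrier S. \<forall>y\<in>carrier S. meet S x y = meet A x y \<and> join S x y = join A x y) \<and>
     (\<forall>x\<in>carrier S. pc S x = pc A x \<and> neg S x = neg A x)"

definition hom :: "('a \<Rightarrow> 'b) \<Rightarrow> 'a pdm \<Rightarrow> 'b pdm \<Rightarrow> bool" where
  "hom h A B \<longleftrightarrow> h ` carrier A \<subseteq> carrier B \<and> h (bot A) = bot B \<and> h (top A) = top B \<and>
     (\<forall>x\<in>carrier A. \<forall>y\<in>carrier A.
        h (meet A x y) = meet B (h x) (h y) \<and> h (join A x y) = join B (h x) (h y)) \<and>
     (\<forall>x\<in>carrier A. h (pc A x) = pc B (h x) \<and> h (neg A x) = neg B (h x))"

definition isomorphic :: "'a pdm \<Rightarrow> 'b pdm \<Rightarrow> bool" where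
  "isomorphic A B \<longleftrightarrow> (\<exists>h. hom h A B \<and> bij_betw h (carrier A) (carrier B))"

end

theory Submission
  imports Defs "HOL-Library.Countable"
begin


definition dplus :: "('a, 'm) pdm_scheme \<Rightarrow> 'a \<Rightarrow> 'a" where
  "dplus A a = neg A (pc A (neg A a))"

fun msem :: "('a, 'm) pdm_scheme \<Rightarrow> nat \<Rightarrow> 'a \<Rightarrow> 'a" where
  "msem A 0 y = y"
| "msem A (Suc k) y = meet A (msem A k y) (iter_ns A (Suc k) y)"

definition Dsem :: "('a, 'm) pdm_scheme \<Rightarrow> nat \<Rightarrow> 'a \<Rightarrow> 'a" where
  "Dsem A k u = msem A k (meet A u (pc A (neg A u)))"

definition Wsem :: "('a, 'm) pdm_scheme \<Rightarrow> 'a \<Rightarrow> 'a \<Rightarrow> 'a" where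
  "Wsem A a b = meet A (meet A (pc A (meet A (pc A a) b)) (pc A (meet A (pc A b) a)))
      (meet A (join A (dplus A a) b) (join A (dplus A b) a))"

definition Fsem :: "('a, 'm) pdm_scheme \<Rightarrow> nat \<Rightarrow> 'a \<Rightarrow> 'a \<Rightarrow> 'a" where
  "Fsem A k a b = Dsem A k (Wsem A a b)"

lemma iter_ns_Suc: "iter_ns A (Suc k) x = pc A (neg A (iter_ns A k x))"
  by (simp add: iter_ns_def)
lemma iter_ns_0: "iter_ns A 0 x = x"
  by (simp add: iter_ns_def)
lemma iter_ns_add: "iter_ns A (j + k) x = iter_ns A j (iter_ns A k x)"
  by (simp add: iter_ns_def funpow_add)

locale pcdm =
  fixes A :: "('a, 'm) pdm_scheme" and n :: nat
  assumes MA: "M n A"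
begin

lemma alg: "is_alg A" using MA unfolding M_def by blast

lemma cl[simp]:
  "bot A \<in> carrier A" "top A \<in> carrier A"
  "x \<in> carrier A \<Longrightarrow> y \<in> carrier A \<Longrightarrow> meet A x y \<in> carrier A"
  "x \<in> carrier A \<Longrightarrow> y \<in> carrier A \<Longrightarrow> join A x y \<in> carrier A"
  "x \<in> carrier A \<Longrightarrow> pc A x \<in> carrier A"
  "x \<in> carrier A \<Longrightarrow> neg A x \<in> carrier A"
  using alg by (auto simp: is_alg_def)

lemma cl_dplus[simp]: "x \<in> carrier A \<Longrightarrow> dplus A x \<in> carrier A"
  by (simp add: dplus_def)
lemma cl_iter[simp]: "x \<in> carrier A \<Longrightarrow> iter_ns A k x \<in> carrier A"
  by (induct k) (auto simp: iter_ns_0 iter_ns_Suc)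
lemma cl_msem[simp]: "x \<in> carrier A \<Longrightarrow> msem A k x \<in> carrier A"
  by (induct k) auto
lemma cl_D[simp]: "x \<in> carrier A \<Longrightarrow> Dsem A k x \<in> carrier A"
  by (simp add: Dsem_def)
lemma cl_W[simp]: "x \<in> carrier A \<Longrightarrow> y \<in> carrier A \<Longrightarrow> Wsem A x y \<in> carrier A"
  by (simp add: Wsem_def)
lemma cl_F[simp]: "x \<in> carrier A \<Longrightarrow> y \<in> carrier A \<Longrightarrow> Fsem A k x y \<in> carrier A"
  by (simp add: Fsem_def)

context
  fixes x y z
  assumes xyz: "x \<in> carrier A" "y \<in> carrier A" "z \<in> carrier A"
begin
lemma massoc: "meet A (meet A x y) z = meet A x (meet A y z)" using MA xyz unfolding M_def by blast
lemma jassoc: "join A (join A x y) z = join A x (join A y z)" using MA xyz unfolding M_def by blast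
lemma mdist: "meet A x (join A y z) = join A (meet A x y) (meet A x z)" using MA xyz unfolding M_def by blast
end

context
  fixes x y
  assumes xy: "x \<in> carrier A" "y \<in> carrier A"
begin
lemma mcomm: "meet A x y = meet A y x" using MA xy unfolding M_def by blast
lemma jcomm: "join A x y = join A y x" using MA xy unfolding M_def by blast
lemma mabs: "meet A x (join A x y) = x" using MA xy unfolding M_def by blast
lemma jabs: "join A x (meet A x y) = x" using MA xy unfolding M_def by blast
lemma pcax: "meet A x y = bot A \<longleftrightarrow> meet A y (pc A x) = y" using MA xy unfolding M_def le_def by blast
lemma negj: "neg A (join A x y) = meet A (neg A x) (neg A y)" using MA xy unfolding M_def by blast
lemma negm: "neg A (meet A x y) = join A (neg A x) (neg A y)" using MA xy unfolding M_def by blast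
lemma regax: "meet A (meet A x (dplus A x)) (join A y (pc A y)) = meet A x (dplus A x)"
  using MA xy unfolding M_def le_def dplus_def by blast
end

lemma negneg[simp]: "x \<in> carrier A \<Longrightarrow> neg A (neg A x) = x" using MA unfolding M_def by blast
lemma negbot[simp]: "neg A (bot A) = top A" using MA unfolding M_def by blast
lemma mbotl[simp]: "x \<in> carrier A \<Longrightarrow> meet A (bot A) x = bot A" using MA unfolding M_def by blast
lemma mtopl[simp]: "x \<in> carrier A \<Longrightarrow> meet A (top A) x = x" using MA unfolding M_def by blast
lemma stab: "x \<in> carrier A \<Longrightarrow> iter_ns A n (meet A x (pc A (neg A x))) = iter_ns A (Suc n) (meet A x (pc A (neg A x)))"
  using MA unfolding M_def by blast

lemma mbotr[simp]: "x \<in> carrier A \<Longrightarrow> meet A x (bot A) = bot A"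
  using mcomm[of x "bot A"] by simp
lemma mtopr[simp]: "x \<in> carrier A \<Longrightarrow> meet A x (top A) = x"
  using mcomm[of x "top A"] by simp
lemma midem[simp]: "x \<in> carrier A \<Longrightarrow> meet A x x = x"
proof -
  assume x: "x \<in> carrier A"
  have "join A x (meet A x x) = x" using x by (rule jabs) (simp add: x)
  moreover have "meet A x (join A x (meet A x x)) = x" using x by (intro mabs) simp_all
  ultimately show ?thesis by simp
qed
lemma jidem[simp]: "x \<in> carrier A \<Longrightarrow> join A x x = x"
proof -
  assume x: "x \<in> carrier A"
  have "meet A x (join A x x) = x" using x by (rule mabs) (simp add: x)
  moreover have "join A x (meet A x (join A x x)) = x" using x by (intro jabs) simp_all
  ultimately show ?thesis by simp
qed
lemma jbotr[simp]: "x \<in> carrier A \<Longrightarrow> join A x (bot A) = x"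
  using jabs[of x "bot A"] by simp
lemma jbotl[simp]: "x \<in> carrier A \<Longrightarrow> join A (bot A) x = x"
  using jcomm[of "bot A" x] jbotr[of x] by simp
lemma jtopl[simp]: "x \<in> carrier A \<Longrightarrow> join A (top A) x = top A"
  using jabs[of "top A" x] by simp
lemma jtopr[simp]: "x \<in> carrier A \<Longrightarrow> join A x (top A) = top A"
  using jcomm[of x "top A"] jtopl[of x] by simp
lemma negtop[simp]: "neg A (top A) = bot A"
  using negneg[of "bot A"] by simp

lemma mdist2: "x \<in> carrier A \<Longrightarrow> y \<in> carrier A \<Longrightarrow> z \<in> carrier A \<Longrightarrow>
   meet A (join A y z) x = join A (meet A y x) (meet A z x)"
  by (simp add: mcomm[of "join A y z" x] mdist mcomm[of x y] mcomm[of x z])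

lemma pc_meet[simp]: "x \<in> carrier A \<Longrightarrow> meet A x (pc A x) = bot A"
  using pcax[of x "pc A x"] by simp
lemma pc_meet'[simp]: "x \<in> carrier A \<Longrightarrow> meet A (pc A x) x = bot A"
  using mcomm[of x "pc A x"] by simp
lemma pctop[simp]: "pc A (top A) = bot A"
  using pc_meet[of "top A"] mtopl[of "pc A (top A)"] by simp
lemma pcbot[simp]: "pc A (bot A) = top A"
  using pcax[of "bot A" "top A"] by simp
lemma negmeet_self[simp]: "x \<in> carrier A \<Longrightarrow> meet A (neg A x) x = bot A \<Longrightarrow> True" by simp

lemma mcomm_assoc: "x \<in> carrier A \<Longrightarrow> y \<in> carrier A \<Longrightarrow> z \<in> carrier A \<Longrightarrow>
  meet A x (meet A y z) = meet A y (meet A x z)"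
  by (simp add: massoc[symmetric] mcomm[of x y])


definition lq where "lq x y \<longleftrightarrow> meet A x y = x"

lemma lq_refl[simp]: "x \<in> carrier A \<Longrightarrow> lq x x" by (simp add: lq_def)
lemma lq_trans: "x \<in> carrier A \<Longrightarrow> y \<in> carrier A \<Longrightarrow> z \<in> carrier A \<Longrightarrow> lq x y \<Longrightarrow> lq y z \<Longrightarrow> lq x z"
  unfolding lq_def using massoc[of x y z] by simp
lemma lq_antisym: "x \<in> carrier A \<Longrightarrow> y \<in> carrier A \<Longrightarrow> lq x y \<Longrightarrow> lq y x \<Longrightarrow> x = y"
  unfolding lq_def using mcomm[of x y] by simp
lemma lq_m1[simp]: "x \<in> carrier A \<Longrightarrow> y \<in> carrier A \<Longrightarrow> lq (meet A x y) x"
  unfolding lq_def by (simp add: mcomm[of "meet A x y" x] massoc[symmetric])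
lemma lq_m2[simp]: "x \<in> carrier A \<Longrightarrow> y \<in> carrier A \<Longrightarrow> lq (meet A x y) y"
  unfolding lq_def by (simp add: massoc)
lemma lq_glb: "x \<in> carrier A \<Longrightarrow> y \<in> carrier A \<Longrightarrow> z \<in> carrier A \<Longrightarrow> lq z x \<Longrightarrow> lq z y \<Longrightarrow> lq z (meet A x y)"
  unfolding lq_def using massoc[of z x y] by simp
lemma lq_j1[simp]: "x \<in> carrier A \<Longrightarrow> y \<in> carrier A \<Longrightarrow> lq x (join A x y)"
  unfolding lq_def by (simp add: mabs)
lemma lq_j2[simp]: "x \<in> carrier A \<Longrightarrow> y \<in> carrier A \<Longrightarrow> lq y (join A x y)"
  unfolding lq_def by (simp add: mabs jcomm[of x y])
lemma lq_lub: "x \<in> carrier A \<Longrightarrow> y \<in> carrier A \<Longrightarrow> z \<in> carrier A \<Longrightarrow> lq x z \<Longrightarrow> lq y z \<Longrightarrow> lq (join A x y) z"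
  unfolding lq_def by (simp add: mdist2)
lemma lq_top[simp]: "x \<in> carrier A \<Longrightarrow> lq x (top A)" by (simp add: lq_def)
lemma lq_bot[simp]: "x \<in> carrier A \<Longrightarrow> lq (bot A) x" by (simp add: lq_def)
lemma lq_botE: "x \<in> carrier A \<Longrightarrow> lq x (bot A) \<Longrightarrow> x = bot A" by (simp add: lq_def)
lemma lq_topE: "x \<in> carrier A \<Longrightarrow> lq (top A) x \<Longrightarrow> x = top A" by (simp add: lq_def)
lemma lq_pc: "x \<in> carrier A \<Longrightarrow> y \<in> carrier A \<Longrightarrow> lq y (pc A x) \<longleftrightarrow> meet A x y = bot A"
  unfolding lq_def using pcax by simp
lemma lq_meet_mono: "x \<in> carrier A \<Longrightarrow> y \<in> carrier A \<Longrightarrow> z \<in> carrier A \<Longrightarrow> lq x y \<Longrightarrow> lq (meet A x z) (meet A y z)"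
proof -
  assume h: "x \<in> carrier A" "y \<in> carrier A" "z \<in> carrier A" "lq x y"
  have "lq (meet A x z) y" using h lq_trans[of "meet A x z" x y] by simp
  thus ?thesis using h by (intro lq_glb) simp_all
qed

lemma meet_top_E: "x \<in> carrier A \<Longrightarrow> y \<in> carrier A \<Longrightarrow> meet A x y = top A \<Longrightarrow> x = top A \<and> y = top A"
  using lq_m1[of x y] lq_m2[of x y] lq_topE[of x] lq_topE[of y] by simp

lemma pc_eq_top: "x \<in> carrier A \<Longrightarrow> pc A x = top A \<Longrightarrow> x = bot A"
  using pc_meet[of x] by simp

lemma pc_anti: "x \<in> carrier A \<Longrightarrow> y \<in> carrier A \<Longrightarrow> lq x y \<Longrightarrow> lq (pc A y) (pc A x)"
proof -
  assume x: "x \<in> carrier A" and y: "y \<in> carrier A" and "lq x y"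
  hence "meet A x (pc A y) = meet A (meet A x y) (pc A y)"
    by (simp add: lq_def)
  also have "\<dots> = meet A x (meet A y (pc A y))" using x y by (simp add: massoc)
  finally have "meet A x (pc A y) = meet A x (meet A y (pc A y))" .
  hence "meet A x (pc A y) = bot A" using x y by simp
  thus ?thesis using lq_pc x y by simp
qed

lemma neg_anti: "x \<in> carrier A \<Longrightarrow> y \<in> carrier A \<Longrightarrow> lq x y \<Longrightarrow> lq (neg A y) (neg A x)"
proof -
  assume x: "x \<in> carrier A" and y: "y \<in> carrier A" and "lq x y"
  hence "neg A x = join A (neg A x) (neg A y)" using negm[of x y] by (simp add: lq_def)
  hence "neg A x = join A (neg A y) (neg A x)" using jcomm x y by simp
  thus ?thesis using lq_j1[of "neg A y" "neg A x"] x y by simp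
qed

lemma ns_mono: "x \<in> carrier A \<Longrightarrow> y \<in> carrier A \<Longrightarrow> lq x y \<Longrightarrow> lq (pc A (neg A x)) (pc A (neg A y))"
  by (simp add: neg_anti pc_anti)

lemma pc_join: "x \<in> carrier A \<Longrightarrow> y \<in> carrier A \<Longrightarrow> pc A (join A x y) = meet A (pc A x) (pc A y)"
proof -
  assume x: "x \<in> carrier A" and y: "y \<in> carrier A"
  have 1: "lq (pc A (join A x y)) (meet A (pc A x) (pc A y))"
    using x y by (intro lq_glb pc_anti) simp_all
  have "meet A x (meet A (pc A x) (pc A y)) = bot A"
    using x y by (simp add: massoc[symmetric])
  moreover have "meet A y (meet A (pc A x) (pc A y)) = bot A"
    using x y by (simp add: mcomm_assoc[of y "pc A x"])
  ultimately have "meet A (join A x y) (meet A (pc A x) (pc A y)) = bot A"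
    using x y by (simp add: mdist2)
  hence 2: "lq (meet A (pc A x) (pc A y)) (pc A (join A x y))"
    using x y lq_pc by simp
  show ?thesis using 1 2 x y by (simp add: lq_antisym)
qed

lemma ns_meet: "x \<in> carrier A \<Longrightarrow> y \<in> carrier A \<Longrightarrow>
   pc A (neg A (meet A x y)) = meet A (pc A (neg A x)) (pc A (neg A y))"
  by (simp add: negm pc_join)

lemma pc_meet_f: "a \<in> carrier A \<Longrightarrow> f \<in> carrier A \<Longrightarrow>
   meet A (pc A (meet A a f)) f = meet A (pc A a) f"
proof -
  assume a: "a \<in> carrier A" and f: "f \<in> carrier A"
  have 1: "lq (meet A (pc A a) f) (meet A (pc A (meet A a f)) f)"
    using a f by (intro lq_meet_mono pc_anti) simp_all
  let ?c = "meet A (pc A (meet A a f)) f"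
  have "meet A a ?c = meet A (meet A a f) (pc A (meet A a f))"
    using a f mcomm[of "pc A (meet A a f)" f] massoc[of a f "pc A (meet A a f)"] by simp
  hence "meet A a ?c = bot A" using a f by simp
  hence "lq ?c (pc A a)" using lq_pc a f by simp
  hence 2: "lq ?c (meet A (pc A a) f)" using a f by (intro lq_glb) simp_all
  show ?thesis using 1 2 a f by (simp add: lq_antisym)
qed

lemma neg_meet_f: "a \<in> carrier A \<Longrightarrow> f \<in> carrier A \<Longrightarrow>
   meet A (neg A (meet A a f)) (pc A (neg A f)) = meet A (neg A a) (pc A (neg A f))"
  by (simp add: negm mdist2)

lemma mswap: "a \<in> carrier A \<Longrightarrow> f \<in> carrier A \<Longrightarrow> g \<in> carrier A \<Longrightarrow>
   meet A (meet A a f) g = meet A (meet A a g) f"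
  by (simp add: massoc mcomm[of f g])

lemma m4: "a \<in> carrier A \<Longrightarrow> c \<in> carrier A \<Longrightarrow> f \<in> carrier A \<Longrightarrow> g \<in> carrier A \<Longrightarrow>
   meet A (meet A a c) (meet A f g) = meet A (meet A a f) (meet A c g)"
  by (simp add: massoc mcomm_assoc[of c f])

lemma plus_join: "a \<in> carrier A \<Longrightarrow> join A a (dplus A a) = top A"
proof -
  assume a: "a \<in> carrier A"
  have "join A a (dplus A a) = neg A (meet A (neg A a) (pc A (neg A a)))"
    using negm[of "neg A a" "pc A (neg A a)"] a by (simp add: dplus_def)
  thus ?thesis using a by simp
qed

lemma regular: "a \<in> carrier A \<Longrightarrow> b \<in> carrier A \<Longrightarrow> pc A a = pc A b \<Longrightarrow> dplus A a = dplus A b \<Longrightarrow> lq a b"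
proof -
  assume a: "a \<in> carrier A" and b: "b \<in> carrier A" and p: "pc A a = pc A b" and q: "dplus A a = dplus A b"
  have "a = meet A a (join A b (dplus A b))" using b a plus_join by simp
  also have "\<dots> = join A (meet A a b) (meet A a (dplus A a))" using a b q by (simp add: mdist)
  finally have e: "a = join A (meet A a b) (meet A a (dplus A a))" .
  have "lq (meet A a (dplus A a)) (join A b (pc A b))" using regax[of a b] a b by (simp add: lq_def)
  hence "lq (meet A a (dplus A a)) (meet A a (join A b (pc A a)))" using a b p
    by (intro lq_glb) simp_all
  moreover have "meet A a (join A b (pc A a)) = meet A a b" using a b by (simp add: mdist)
  ultimately have "lq (meet A a (dplus A a)) (meet A a b)" by simp
  hence "lq (join A (meet A a b) (meet A a (dplus A a))) (meet A a b)" using a b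
    by (intro lq_lub) simp_all
  hence "lq a (meet A a b)" by (simp only: e[symmetric])
  thus ?thesis using a b lq_trans[of a "meet A a b" b] by simp
qed

end


context pcdm begin

lemma ms_le_ys: "y \<in> carrier A \<Longrightarrow> lq (msem A k y) (iter_ns A k y)"
  by (cases k) (simp_all add: iter_ns_0)

lemma ms_dec: "y \<in> carrier A \<Longrightarrow> lq (msem A (Suc k) y) (msem A k y)"
  by simp

lemma ms_anti: assumes "y \<in> carrier A" "j \<le> k" shows "lq (msem A k y) (msem A j y)"
  using assms(2)
proof (induct k rule: dec_induct)
  case base
  then show ?case using assms by simp
next
  case (step k)
  then show ?case using ms_dec[of y k] assms
    lq_trans[of "msem A (Suc k) y" "msem A k y" "msem A j y"] by simp
qed

lemma ms_ns: "y \<in> carrier A \<Longrightarrow> lq (msem A (Suc k) y) (pc A (neg A (msem A k y)))"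
proof (induct k)
  case 0
  then show ?case by (simp add: iter_ns_Suc iter_ns_0)
next
  case (Suc k)
  have e: "pc A (neg A (msem A (Suc k) y)) = meet A (pc A (neg A (msem A k y))) (iter_ns A (Suc (Suc k)) y)"
    using Suc by (simp add: ns_meet iter_ns_Suc)
  show ?case unfolding e using Suc
    by (simp only: msem.simps(2)[of A "Suc k"]) (rule lq_meet_mono, simp_all)
qed

lemma stab_iter: "u \<in> carrier A \<Longrightarrow>
   iter_ns A (n + j) (meet A u (pc A (neg A u))) = iter_ns A n (meet A u (pc A (neg A u)))"
proof (induct j)
  case 0
  then show ?case by simp
next
  case (Suc j)
  have "iter_ns A (n + Suc j) (meet A u (pc A (neg A u))) =
        pc A (neg A (iter_ns A (n + j) (meet A u (pc A (neg A u)))))"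
    by (simp add: iter_ns_Suc)
  also have "\<dots> = iter_ns A (Suc n) (meet A u (pc A (neg A u)))"
    using Suc by (simp add: iter_ns_Suc)
  also have "\<dots> = iter_ns A n (meet A u (pc A (neg A u)))"
    using stab[OF Suc(2)] by simp
  finally show ?case .
qed

lemma ms_const: assumes u: "u \<in> carrier A" and nk: "n \<le> k" shows
   "msem A k (meet A u (pc A (neg A u))) = msem A n (meet A u (pc A (neg A u)))"
  using nk
proof (induct k rule: dec_induct)
  case base
  then show ?case by simp
next
  case (step k)
  let ?y = "meet A u (pc A (neg A u))"
  have y: "?y \<in> carrier A" using u by simp
  have "iter_ns A (Suc k) ?y = iter_ns A k ?y"
    using stab_iter[OF u, of "Suc k - n"] stab_iter[OF u, of "k - n"] step(1) by simp
  hence "lq (msem A k ?y) (iter_ns A (Suc k) ?y)" using ms_le_ys[OF y, of k] by simp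
  hence "msem A (Suc k) ?y = msem A k ?y" by (simp add: lq_def)
  then show ?case using step by simp
qed

lemma ms_n_le: "u \<in> carrier A \<Longrightarrow>
   lq (msem A n (meet A u (pc A (neg A u)))) (msem A k (meet A u (pc A (neg A u))))"
proof (cases "n \<le> k")
  case True
  assume u: "u \<in> carrier A"
  then show ?thesis using ms_const[OF u True] by simp
next
  case False
  assume u: "u \<in> carrier A"
  then show ?thesis using ms_anti[of _ k n] False by simp
qed

definition Fl where "Fl y = {a \<in> carrier A. \<exists>k. lq (msem A k y) a}"
definition th where "th y = {(a,b). a \<in> carrier A \<and> b \<in> carrier A \<and> (\<exists>f \<in> Fl y. meet A a f = meet A b f)}"

lemma Fl_top: "y \<in> carrier A \<Longrightarrow> top A \<in> Fl y"
  unfolding Fl_def by (auto intro: exI[of _ 0])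

lemma Fl_meet: "y \<in> carrier A \<Longrightarrow> f \<in> Fl y \<Longrightarrow> g \<in> Fl y \<Longrightarrow> meet A f g \<in> Fl y"
proof -
  assume y: "y \<in> carrier A" and f: "f \<in> Fl y" and g: "g \<in> Fl y"
  obtain k1 where k1: "lq (msem A k1 y) f" "f \<in> carrier A" using f Fl_def by auto
  obtain k2 where k2: "lq (msem A k2 y) g" "g \<in> carrier A" using g Fl_def by auto
  have "lq (msem A (max k1 k2) y) f"
    using ms_anti[OF y, of k1 "max k1 k2"] k1 y lq_trans[of _ "msem A k1 y" f] by simp
  moreover have "lq (msem A (max k1 k2) y) g"
    using ms_anti[OF y, of k2 "max k1 k2"] k2 y lq_trans[of _ "msem A k2 y" g] by simp
  ultimately have "lq (msem A (max k1 k2) y) (meet A f g)" using k1 k2 y by (intro lq_glb) simp_all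
  moreover have "meet A f g \<in> carrier A" using k1 k2 by simp
  ultimately show ?thesis unfolding Fl_def by blast
qed

lemma Fl_ns: "y \<in> carrier A \<Longrightarrow> f \<in> Fl y \<Longrightarrow> pc A (neg A f) \<in> Fl y"
proof -
  assume y: "y \<in> carrier A" and f: "f \<in> Fl y"
  obtain k where k: "lq (msem A k y) f" "f \<in> carrier A" using f Fl_def by auto
  have "lq (pc A (neg A (msem A k y))) (pc A (neg A f))" using ns_mono k y by simp
  hence "lq (msem A (Suc k) y) (pc A (neg A f))"
    using ms_ns[OF y, of k] y k lq_trans[of "msem A (Suc k) y" "pc A (neg A (msem A k y))"] by simp
  moreover have "pc A (neg A f) \<in> carrier A" using k by simp
  ultimately show ?thesis unfolding Fl_def by blast
qed

lemma Fl_car: "f \<in> Fl y \<Longrightarrow> f \<in> carrier A" by (simp add: Fl_def)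

lemma th_cong: assumes y: "y \<in> carrier A" shows "congruence A (th y)"
proof -
  have refl: "refl_on (carrier A) (th y)"
    unfolding refl_on_def th_def using Fl_top[OF y] by auto
  have sym: "sym (th y)" unfolding sym_def th_def by auto metis
  have trans: "trans (th y)"
  proof (rule transI)
    fix a b c assume "(a, b) \<in> th y" "(b, c) \<in> th y"
    then obtain f g where h: "a \<in> carrier A" "b \<in> carrier A" "c \<in> carrier A" "f \<in> Fl y" "g \<in> Fl y"
      "meet A a f = meet A b f" "meet A b g = meet A c g" unfolding th_def by auto
    have fc: "f \<in> carrier A" "g \<in> carrier A" using h Fl_car by auto
    have "meet A a (meet A f g) = meet A (meet A a f) g" using h fc massoc[of a f g] by simp
    also have "\<dots> = meet A (meet A b f) g" using h by simp
    also have "\<dots> = meet A (meet A b g) f" using h fc mswap[of b f g] by simp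
    also have "\<dots> = meet A (meet A c g) f" using h by simp
    also have "\<dots> = meet A (meet A c f) g" using h fc mswap[of c g f] by simp
    also have "\<dots> = meet A c (meet A f g)" using h fc massoc[of c f g] by simp
    finally have "meet A a (meet A f g) = meet A c (meet A f g)" .
    thus "(a, c) \<in> th y" unfolding th_def using h Fl_meet[OF y] by blast
  qed
  have ops: "(meet A a c, meet A b d) \<in> th y \<and> (join A a c, join A b d) \<in> th y"
    if "(a, b) \<in> th y" "(c, d) \<in> th y" for a b c d
  proof -
    have t1: "a \<in> carrier A" "b \<in> carrier A" "\<exists>f\<in>Fl y. meet A a f = meet A b f"
      using that(1) unfolding th_def by auto
    have t2: "c \<in> carrier A" "d \<in> carrier A" "\<exists>f\<in>Fl y. meet A c f = meet A d f"
      using that(2) unfolding th_def by auto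
    obtain f g where h: "a \<in> carrier A" "b \<in> carrier A" "c \<in> carrier A" "d \<in> carrier A"
      "f \<in> Fl y" "g \<in> Fl y"
      "meet A a f = meet A b f" "meet A c g = meet A d g" using t1 t2 by blast
    have fc: "f \<in> carrier A" "g \<in> carrier A" using h Fl_car by auto
    have fg: "meet A f g \<in> Fl y" using Fl_meet[OF y] h by blast
    have "meet A (meet A a c) (meet A f g) = meet A (meet A b d) (meet A f g)"
      using h fc m4[of a c f g] m4[of b d f g] by simp
    moreover
    have e1: "meet A a (meet A f g) = meet A b (meet A f g)"
      using h fc massoc[of a f g] massoc[of b f g] by simp
    have e2: "meet A c (meet A f g) = meet A d (meet A f g)"
      using h fc massoc[of c g f] massoc[of d g f] mcomm[of f g] by simp
    have "meet A (join A a c) (meet A f g) = meet A (join A b d) (meet A f g)"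
      using h fc e1 e2 mdist2[of "meet A f g" a c] mdist2[of "meet A f g" b d] by simp
    ultimately show ?thesis unfolding th_def using h fg by auto
  qed
  have un: "(pc A a, pc A b) \<in> th y \<and> (neg A a, neg A b) \<in> th y" if "(a, b) \<in> th y" for a b
  proof -
    have t1: "a \<in> carrier A" "b \<in> carrier A" "\<exists>f\<in>Fl y. meet A a f = meet A b f"
      using that(1) unfolding th_def by auto
    obtain f where h: "a \<in> carrier A" "b \<in> carrier A" "f \<in> Fl y"
      "meet A a f = meet A b f" using t1 by blast
    have fc: "f \<in> carrier A" using h Fl_car by auto
    have "meet A (pc A a) f = meet A (pc A b) f"
      using h fc pc_meet_f[of a f] pc_meet_f[of b f] by simp
    moreover have "meet A (neg A a) (pc A (neg A f)) = meet A (neg A b) (pc A (neg A f))"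
      using h fc neg_meet_f[of a f] neg_meet_f[of b f] by simp
    ultimately show ?thesis unfolding th_def using h Fl_ns[OF y h(3)] by auto
  qed
  have sub: "th y \<subseteq> carrier A \<times> carrier A" unfolding th_def by auto
  show ?thesis unfolding congruence_def equiv_def using sub refl sym trans ops un by auto
qed

lemma D_le: "u \<in> carrier A \<Longrightarrow> lq (Dsem A k u) u"
proof -
  assume u: "u \<in> carrier A"
  let ?y = "meet A u (pc A (neg A u))"
  have "lq (msem A k ?y) (msem A 0 ?y)" using ms_anti[of ?y 0 k] u by simp
  hence "lq (msem A k ?y) ?y" by simp
  thus ?thesis unfolding Dsem_def using u lq_trans[of "msem A k ?y" ?y u] by simp
qed

lemma iter_top: "iter_ns A k (top A) = top A"
  by (induct k) (simp_all add: iter_ns_0 iter_ns_Suc)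

lemma ms_top: "msem A k (top A) = top A"
  by (induct k) (simp_all add: iter_top)

lemma D_top: "Dsem A k (top A) = top A"
  by (simp add: Dsem_def ms_top)

lemma W_self: "a \<in> carrier A \<Longrightarrow> Wsem A a a = top A"
  using plus_join[of a] jcomm[of a "dplus A a"] by (simp add: Wsem_def)

lemma F_self: "a \<in> carrier A \<Longrightarrow> Fsem A k a a = top A"
  by (simp add: Fsem_def W_self D_top)

lemma W_top: assumes a: "a \<in> carrier A" and b: "b \<in> carrier A" and w: "Wsem A a b = top A"
  shows "a = b"
proof -
  have hh: "meet A (pc A (meet A (pc A a) b)) (pc A (meet A (pc A b) a)) = top A \<and>
          meet A (join A (dplus A a) b) (join A (dplus A b) a) = top A"
      using w a b unfolding Wsem_def by (intro meet_top_E) simp_all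
  have h: "pc A (meet A (pc A a) b) = top A" "pc A (meet A (pc A b) a) = top A"
      "join A (dplus A a) b = top A" "join A (dplus A b) a = top A"
    using hh a b meet_top_E[of "pc A (meet A (pc A a) b)" "pc A (meet A (pc A b) a)"]
      meet_top_E[of "join A (dplus A a) b" "join A (dplus A b) a"] by simp_all
  have "meet A (pc A a) b = bot A" using h(1) pc_eq_top a b by simp
  hence p1: "lq (pc A a) (pc A b)" using lq_pc a b mcomm[of b "pc A a"] by simp
  have "meet A (pc A b) a = bot A" using h(2) pc_eq_top a b by simp
  hence p2: "lq (pc A b) (pc A a)" using lq_pc a b mcomm[of a "pc A b"] by simp
  have pp: "pc A a = pc A b" using p1 p2 lq_antisym a b by simp
  have q: "lq (dplus A b) (dplus A a)" if "join A (dplus A a) b = top A"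
     and a: "a \<in> carrier A" and b: "b \<in> carrier A" for a b
  proof -
    have "neg A (join A (dplus A a) b) = bot A" using that by simp
    hence "meet A (pc A (neg A a)) (neg A b) = bot A" using a b negj by (simp add: dplus_def)
    hence "meet A (neg A b) (pc A (neg A a)) = bot A" using a b mcomm by simp
    hence "lq (pc A (neg A a)) (pc A (neg A b))" using lq_pc a b by simp
    thus ?thesis using neg_anti a b by (simp add: dplus_def)
  qed
  have "dplus A a = dplus A b" using q[OF h(3) a b] q[OF h(4) b a] lq_antisym a b by simp
  thus ?thesis using pp regular[of a b] regular[of b a] lq_antisym a b by simp
qed

lemma F_top: "a \<in> carrier A \<Longrightarrow> b \<in> carrier A \<Longrightarrow> Fsem A k a b = top A \<Longrightarrow> a = b"
proof -
  assume a: "a \<in> carrier A" and b: "b \<in> carrier A" and f: "Fsem A k a b = top A"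
  have "lq (Dsem A k (Wsem A a b)) (Wsem A a b)" using D_le a b by simp
  hence "lq (top A) (Wsem A a b)" using f by (simp only: Fsem_def)
  hence "Wsem A a b = top A" using lq_topE a b by simp
  thus ?thesis using W_top a b by blast
qed

end

locale spcdm = pcdm +
  assumes simpleA: "simple A"
begin

lemma D01: assumes u: "u \<in> carrier A" shows "Dsem A n u = bot A \<or> Dsem A n u = top A"
proof -
  let ?y = "meet A u (pc A (neg A u))"
  have y: "?y \<in> carrier A" using u by simp
  have mem: "th ?y \<in> {\<theta>. congruence A \<theta>}" using th_cong[OF y] by (simp only: mem_Collect_eq)
  have eq: "{\<theta>. congruence A \<theta>} = {Id_on (carrier A), carrier A \<times> carrier A}"
    using simpleA unfolding simple_def by (elim conjE)
  have "th ?y \<in> {Id_on (carrier A), carrier A \<times> carrier A}" using mem by (simp only: eq)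
  hence "th ?y = Id_on (carrier A) \<or> th ?y = carrier A \<times> carrier A"
    by (simp only: insert_iff empty_iff simp_thms)
  thus ?thesis
  proof
    assume idc: "th ?y = Id_on (carrier A)"
    have "lq (msem A 0 ?y) ?y" using y by simp
    hence yF: "?y \<in> Fl ?y" unfolding Fl_def using y by blast
    have yy: "meet A ?y ?y = meet A (top A) ?y" using y by simp
    have "(?y, top A) \<in> th ?y" unfolding th_def using y yF yy
      by (simp only: mem_Collect_eq case_prod_conv) (use cl(2) in blast)
    hence "(?y, top A) \<in> Id_on (carrier A)" by (simp only: idc)
    hence "?y = top A" by (simp only: Id_on_iff)
    thus ?thesis by (simp add: Dsem_def ms_top)
  next
    assume tc: "th ?y = carrier A \<times> carrier A"
    have "(bot A, top A) \<in> th ?y" by (simp only: tc) simp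
    then obtain f where f: "f \<in> Fl ?y" "meet A (bot A) f = meet A (top A) f" unfolding th_def by blast
    then obtain k where k: "lq (msem A k ?y) f" "f \<in> carrier A" unfolding Fl_def by blast
    have "f = bot A" using f k by simp
    hence "lq (msem A n ?y) (bot A)" using k ms_n_le[OF u, of k] y
      lq_trans[of "msem A n ?y" "msem A k ?y" "bot A"] by simp
    thus ?thesis using lq_botE y by (simp add: Dsem_def)
  qed
qed

lemma F01: "a \<in> carrier A \<Longrightarrow> b \<in> carrier A \<Longrightarrow> Fsem A n a b = bot A \<or> Fsem A n a b = top A"
  unfolding Fsem_def by (rule D01) simp

end


definition NS :: "tm \<Rightarrow> tm" where "NS t = Pc (Ng t)"
fun mT :: "nat \<Rightarrow> tm \<Rightarrow> tm" where
  "mT 0 y = y"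
| "mT (Suc k) y = Mt (mT k y) ((NS ^^ Suc k) y)"
definition DT :: "nat \<Rightarrow> tm \<Rightarrow> tm" where "DT k u = mT k (Mt u (Pc (Ng u)))"
definition PlusT :: "tm \<Rightarrow> tm" where "PlusT a = Ng (Pc (Ng a))"
definition WT :: "tm \<Rightarrow> tm \<Rightarrow> tm" where
  "WT a b = Mt (Mt (Pc (Mt (Pc a) b)) (Pc (Mt (Pc b) a))) (Mt (Jn (PlusT a) b) (Jn (PlusT b) a))"
definition FT :: "nat \<Rightarrow> tm \<Rightarrow> tm \<Rightarrow> tm" where "FT k a b = DT k (WT a b)"

lemma eval_NS: "eval A \<sigma> ((NS ^^ k) t) = iter_ns A k (eval A \<sigma> t)"
  by (induct k) (simp_all add: iter_ns_0 iter_ns_Suc NS_def)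
lemma eval_mT: "eval A \<sigma> (mT k t) = msem A k (eval A \<sigma> t)"
  by (induct k) (simp_all add: eval_NS del: funpow.simps)
lemma eval_DT[simp]: "eval A \<sigma> (DT k u) = Dsem A k (eval A \<sigma> u)"
  by (simp add: DT_def Dsem_def eval_mT)
lemma eval_WT[simp]: "eval A \<sigma> (WT a b) = Wsem A (eval A \<sigma> a) (eval A \<sigma> b)"
  by (simp add: WT_def Wsem_def PlusT_def dplus_def)
lemma eval_FT[simp]: "eval A \<sigma> (FT k a b) = Fsem A k (eval A \<sigma> a) (eval A \<sigma> b)"
  by (simp add: FT_def Fsem_def)

context
  fixes X :: "('a, 'm) pdm_scheme"
  assumes isa: "is_alg X"
begin
lemma gcl[simp]:
  "bot X \<in> carrier X" "top X \<in> carrier X"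
  "x \<in> carrier X \<Longrightarrow> y \<in> carrier X \<Longrightarrow> meet X x y \<in> carrier X"
  "x \<in> carrier X \<Longrightarrow> y \<in> carrier X \<Longrightarrow> join X x y \<in> carrier X"
  "x \<in> carrier X \<Longrightarrow> pc X x \<in> carrier X"
  "x \<in> carrier X \<Longrightarrow> neg X x \<in> carrier X"
  using isa by (auto simp: is_alg_def)
lemma gcl_iter[simp]: "x \<in> carrier X \<Longrightarrow> iter_ns X k x \<in> carrier X"
  by (induct k) (auto simp: iter_ns_0 iter_ns_Suc)
lemma gcl_msem[simp]: "x \<in> carrier X \<Longrightarrow> msem X k x \<in> carrier X"
  by (induct k) auto
lemma gcl_D[simp]: "x \<in> carrier X \<Longrightarrow> Dsem X k x \<in> carrier X"
  by (simp add: Dsem_def)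
lemma gcl_W[simp]: "x \<in> carrier X \<Longrightarrow> y \<in> carrier X \<Longrightarrow> Wsem X x y \<in> carrier X"
  by (simp add: Wsem_def dplus_def)
lemma gcl_F[simp]: "x \<in> carrier X \<Longrightarrow> y \<in> carrier X \<Longrightarrow> Fsem X k x y \<in> carrier X"
  by (simp add: Fsem_def)
lemma geval[simp]: "(\<And>i. \<sigma> i \<in> carrier X) \<Longrightarrow> eval X \<sigma> t \<in> carrier X"
  by (induct t) auto
end

section \<open>Identities in simple members\<close>

context spcdm begin

lemma idJ4: "x \<in> carrier A \<Longrightarrow> z \<in> carrier A \<Longrightarrow>
  meet A (neg A x) (Dsem A n z) = meet A (neg A (meet A x (Dsem A n z))) (Dsem A n z)"
  using D01[of z] by auto

lemma idI1: "x \<in> carrier A \<Longrightarrow> y \<in> carrier A \<Longrightarrow>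
  meet A x (Fsem A n x y) = meet A y (Fsem A n x y)"
  using F01[of x y] F_top[of x y n] by auto

lemma idJ1: "x \<in> carrier A \<Longrightarrow> y \<in> carrier A \<Longrightarrow> z \<in> carrier A \<Longrightarrow>
  meet A (meet A x y) z = meet A (meet A x z) (meet A y z)"
  using m4[of x y z z] by simp

end

definition s3 :: "'a \<Rightarrow> 'a \<Rightarrow> 'a \<Rightarrow> nat \<Rightarrow> 'a" where
  "s3 p q r = (\<lambda>i. if i = 0 then p else if i = 1 then q else r)"

lemma s3_simps[simp]: "s3 p q r 0 = p" "s3 p q r (Suc 0) = q" "s3 p q r (Suc (Suc 0)) = r"
  by (simp_all add: s3_def)

abbreviation "vx \<equiv> Var 0"
abbreviation "vy \<equiv> Var 1"
abbreviation "vz \<equiv> Var 2"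

definition idents :: "nat \<Rightarrow> (tm \<times> tm) set" where
  "idents k = {(Mt vx (FT k vx vy), Mt vy (FT k vx vy)),
     (Mt vx Top, vx), (Mt vx Bot, Bot), (Pc Bot, Top), (FT k vx vx, Top),
     (Mt (Mt vx vy) vz, Mt (Mt vx vz) (Mt vy vz)),
     (Mt (Jn vx vy) vz, Jn (Mt vx vz) (Mt vy vz)),
     (Mt (Pc vx) (DT k vz), Mt (Pc (Mt vx (DT k vz))) (DT k vz)),
     (Mt (Ng vx) (DT k vz), Mt (Ng (Mt vx (DT k vz))) (DT k vz)),
     (Mt vx vx, vx), (Mt Top vx, vx), (Mt Bot vx, Bot)}"

lemma (in spcdm) idents_sat: "(s, t) \<in> idents n \<Longrightarrow> sat A s t"
proof -
  assume st: "(s, t) \<in> idents n"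
  have "eval A \<sigma> s = eval A \<sigma> t" if \<sigma>: "\<And>i. \<sigma> i \<in> carrier A" for \<sigma>
  proof -
    have c: "\<sigma> 0 \<in> carrier A" "\<sigma> (Suc 0) \<in> carrier A" "\<sigma> 2 \<in> carrier A" "\<sigma> 1 \<in> carrier A" using \<sigma> by auto
    have "s = Mt vx (FT n vx vy) \<and> t = Mt vy (FT n vx vy) \<or> s = Mt vx Top \<and> t = vx \<or>
      s = Mt vx Bot \<and> t = Bot \<or> s = Pc Bot \<and> t = Top \<or> s = FT n vx vx \<and> t = Top \<or>
      s = Mt (Mt vx vy) vz \<and> t = Mt (Mt vx vz) (Mt vy vz) \<or>
      s = Mt (Jn vx vy) vz \<and> t = Jn (Mt vx vz) (Mt vy vz) \<or>
      s = Mt (Pc vx) (DT n vz) \<and> t = Mt (Pc (Mt vx (DT n vz))) (DT n vz) \<or>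
      s = Mt (Ng vx) (DT n vz) \<and> t = Mt (Ng (Mt vx (DT n vz))) (DT n vz) \<or>
      s = Mt vx vx \<and> t = vx \<or> s = Mt Top vx \<and> t = vx \<or> s = Mt Bot vx \<and> t = Bot"
      using st unfolding idents_def by (simp only: insert_iff empty_iff prod.inject simp_thms)
    thus ?thesis
      apply (elim disjE conjE)
       apply (simp only: eval.simps eval_FT)
       apply (rule idI1[OF c(1) c(4)])
      by (simp_all add: c F_self mdist2 pc_meet_f idJ4[symmetric] idJ1[of "\<sigma> 0" "\<sigma> (Suc 0)" "\<sigma> 2"])
  qed
  thus ?thesis unfolding sat_def by blast
qed



lemma spcdmI: "simple A \<Longrightarrow> M n A \<Longrightarrow> spcdm A n"
  by (simp add: spcdm_def pcdm_def spcdm_axioms_def)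

lemma s3_num[simp]: "s3 p q r 1 = q" "s3 p q r 2 = r"
  by (simp_all add: s3_def)

locale Bctx =
  fixes K :: "'a pdm set" and n :: nat and B :: "'b pdm"
  assumes Kh: "\<forall>A\<in>K. simple A \<and> M n A"
    and inV: "in_V K B" and sB: "simple B"
begin

lemma isB: "is_alg B" using inV by (simp add: in_V_def)

lemma satB: "(s, t) \<in> idents n \<Longrightarrow> sat B s t"
proof -
  assume st: "(s, t) \<in> idents n"
  have "\<forall>A\<in>K. sat A s t" using Kh spcdmI spcdm.idents_sat st by blast
  thus ?thesis using inV by (simp add: in_V_def)
qed

lemma Bid: "(s, t) \<in> idents n \<Longrightarrow> p \<in> carrier B \<Longrightarrow> q \<in> carrier B \<Longrightarrow> r \<in> carrier B \<Longrightarrow>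
  eval B (s3 p q r) s = eval B (s3 p q r) t"
proof -
  assume st: "(s, t) \<in> idents n" and c: "p \<in> carrier B" "q \<in> carrier B" "r \<in> carrier B"
  have "\<forall>i. s3 p q r i \<in> carrier B" using c by (simp add: s3_def)
  thus ?thesis using satB[OF st] by (simp add: sat_def)
qed

lemma B_mtop: "p \<in> carrier B \<Longrightarrow> meet B p (top B) = p"
  using Bid[of "Mt vx Top" vx p p p] by (simp add: idents_def)
lemma B_mbot: "p \<in> carrier B \<Longrightarrow> meet B p (bot B) = bot B"
  using Bid[of "Mt vx Bot" Bot p p p] by (simp add: idents_def)
lemma B_pcbot: "pc B (bot B) = top B"
  using Bid[of "Pc Bot" Top "top B" "top B" "top B"] isB by (simp add: idents_def)
lemma B_Fself: "p \<in> carrier B \<Longrightarrow> Fsem B n p p = top B"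
  using Bid[of "FT n vx vx" Top p p p] by (simp add: idents_def)
lemma B_I1: "p \<in> carrier B \<Longrightarrow> q \<in> carrier B \<Longrightarrow> meet B p (Fsem B n p q) = meet B q (Fsem B n p q)"
  using Bid[of "Mt vx (FT n vx vy)" "Mt vy (FT n vx vy)" p q q] by (simp add: idents_def)
lemma B_J1: "p \<in> carrier B \<Longrightarrow> q \<in> carrier B \<Longrightarrow> r \<in> carrier B \<Longrightarrow>
   meet B (meet B p q) r = meet B (meet B p r) (meet B q r)"
  using Bid[of "Mt (Mt vx vy) vz" "Mt (Mt vx vz) (Mt vy vz)" p q r] by (simp add: idents_def)
lemma B_J2: "p \<in> carrier B \<Longrightarrow> q \<in> carrier B \<Longrightarrow> r \<in> carrier B \<Longrightarrow>
   meet B (join B p q) r = join B (meet B p r) (meet B q r)"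
  using Bid[of "Mt (Jn vx vy) vz" "Jn (Mt vx vz) (Mt vy vz)" p q r] by (simp add: idents_def)
lemma B_J3: "p \<in> carrier B \<Longrightarrow> r \<in> carrier B \<Longrightarrow>
   meet B (pc B p) (Dsem B n r) = meet B (pc B (meet B p (Dsem B n r))) (Dsem B n r)"
  using Bid[of "Mt (Pc vx) (DT n vz)" "Mt (Pc (Mt vx (DT n vz))) (DT n vz)" p p r] by (simp add: idents_def)
lemma B_J4: "p \<in> carrier B \<Longrightarrow> r \<in> carrier B \<Longrightarrow>
   meet B (neg B p) (Dsem B n r) = meet B (neg B (meet B p (Dsem B n r))) (Dsem B n r)"
  using Bid[of "Mt (Ng vx) (DT n vz)" "Mt (Ng (Mt vx (DT n vz))) (DT n vz)" p p r] by (simp add: idents_def)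
lemma B_midem: "p \<in> carrier B \<Longrightarrow> meet B p p = p"
  using Bid[of "Mt vx vx" vx p p p] by (simp add: idents_def)
lemma B_mtopl: "p \<in> carrier B \<Longrightarrow> meet B (top B) p = p"
  using Bid[of "Mt Top vx" vx p p p] by (simp add: idents_def)
lemma B_mbotl: "p \<in> carrier B \<Longrightarrow> meet B (bot B) p = bot B"
  using Bid[of "Mt Bot vx" Bot p p p] by (simp add: idents_def)

lemma B_nontriv: "top B \<noteq> bot B"
proof
  assume e: "top B = bot B"
  obtain x y where xy: "x \<in> carrier B" "y \<in> carrier B" "x \<noteq> y" using sB by (auto simp: simple_def)
  have "x = bot B" using B_mtop[OF xy(1)] B_mbot[OF xy(1)] e by simp
  moreover have "y = bot B" using B_mtop[OF xy(2)] B_mbot[OF xy(2)] e by simp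
  ultimately show False using xy by simp
qed

lemma B_D01: assumes u: "u \<in> carrier B" shows "Dsem B n u = bot B \<or> Dsem B n u = top B"
proof -
  let ?b = "Dsem B n u"
  have b: "?b \<in> carrier B" using u isB by simp
  define \<theta> where "\<theta> = {(p, q). p \<in> carrier B \<and> q \<in> carrier B \<and> meet B p ?b = meet B q ?b}"
  have cong: "congruence B \<theta>"
  proof -
    have sub: "\<theta> \<subseteq> carrier B \<times> carrier B" unfolding \<theta>_def by auto
    have refl: "refl_on (carrier B) \<theta>" unfolding refl_on_def \<theta>_def by auto
    have sym: "sym \<theta>" unfolding sym_def \<theta>_def by auto
    have trans: "trans \<theta>" unfolding trans_def \<theta>_def by auto
    have ops: "(meet B p r, meet B q s) \<in> \<theta> \<and> (join B p r, join B q s) \<in> \<theta>"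
      if "(p, q) \<in> \<theta>" "(r, s) \<in> \<theta>" for p q r s
    proof -
      have h: "p \<in> carrier B" "q \<in> carrier B" "r \<in> carrier B" "s \<in> carrier B"
        "meet B p ?b = meet B q ?b" "meet B r ?b = meet B s ?b" using that unfolding \<theta>_def by auto
      have "meet B (meet B p r) ?b = meet B (meet B q s) ?b"
        using h b B_J1[of p r ?b] B_J1[of q s ?b] by simp
      moreover have "meet B (join B p r) ?b = meet B (join B q s) ?b"
        using h b B_J2[of p r ?b] B_J2[of q s ?b] by simp
      ultimately show ?thesis unfolding \<theta>_def using h isB by simp
    qed
    have un: "(pc B p, pc B q) \<in> \<theta> \<and> (neg B p, neg B q) \<in> \<theta>" if "(p, q) \<in> \<theta>" for p q
    proof -
      have h: "p \<in> carrier B" "q \<in> carrier B" "meet B p ?b = meet B q ?b"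
        using that unfolding \<theta>_def by auto
      have "meet B (pc B p) ?b = meet B (pc B q) ?b"
        using h u B_J3[of p u] B_J3[of q u] by simp
      moreover have "meet B (neg B p) ?b = meet B (neg B q) ?b"
        using h u B_J4[of p u] B_J4[of q u] by simp
      ultimately show ?thesis unfolding \<theta>_def using h isB by simp
    qed
    show ?thesis unfolding congruence_def equiv_def using sub refl sym trans ops un by auto
  qed
  have mem: "\<theta> \<in> {\<theta>. congruence B \<theta>}" using cong by (simp only: mem_Collect_eq)
  have eq: "{\<theta>. congruence B \<theta>} = {Id_on (carrier B), carrier B \<times> carrier B}"
    using sB unfolding simple_def by (elim conjE)
  have "\<theta> \<in> {Id_on (carrier B), carrier B \<times> carrier B}" using mem by (simp only: eq)
  hence "\<theta> = Id_on (carrier B) \<or> \<theta> = carrier B \<times> carrier B"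
    by (simp only: insert_iff empty_iff simp_thms)
  thus ?thesis
  proof
    assume idc: "\<theta> = Id_on (carrier B)"
    have "(?b, top B) \<in> \<theta>" unfolding \<theta>_def using b isB B_midem[OF b] B_mtopl[OF b] by simp
    hence "(?b, top B) \<in> Id_on (carrier B)" by (simp only: idc)
    hence "?b = top B" by (simp only: Id_on_iff)
    thus ?thesis by simp
  next
    assume tc: "\<theta> = carrier B \<times> carrier B"
    have "(bot B, top B) \<in> \<theta>" using isB by (simp only: tc) simp
    hence "meet B (bot B) ?b = meet B (top B) ?b" unfolding \<theta>_def by simp
    hence "?b = bot B" using B_mbotl[OF b] B_mtopl[OF b] by simp
    thus ?thesis by simp
  qed
qed

lemma B_F01: "p \<in> carrier B \<Longrightarrow> q \<in> carrier B \<Longrightarrow> Fsem B n p q = bot B \<or> Fsem B n p q = top B"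
  unfolding Fsem_def by (rule B_D01) (simp add: isB)

lemma B_Ftop: "p \<in> carrier B \<Longrightarrow> q \<in> carrier B \<Longrightarrow> Fsem B n p q = top B \<Longrightarrow> p = q"
  using B_I1[of p q] B_mtop by simp

end


instance tm :: countable by countable_datatype

fun bnd :: "nat \<Rightarrow> tm \<Rightarrow> bool" where
  "bnd m (Var i) = (i < m)"
| "bnd m Bot = True"
| "bnd m Top = True"
| "bnd m (Mt s t) = (bnd m s \<and> bnd m t)"
| "bnd m (Jn s t) = (bnd m s \<and> bnd m t)"
| "bnd m (Pc s) = bnd m s"
| "bnd m (Ng s) = bnd m s"

fun subst :: "(nat \<Rightarrow> tm) \<Rightarrow> tm \<Rightarrow> tm" where
  "subst \<tau> (Var i) = \<tau> i"
| "subst \<tau> Bot = Bot"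
| "subst \<tau> Top = Top"
| "subst \<tau> (Mt s t) = Mt (subst \<tau> s) (subst \<tau> t)"
| "subst \<tau> (Jn s t) = Jn (subst \<tau> s) (subst \<tau> t)"
| "subst \<tau> (Pc s) = Pc (subst \<tau> s)"
| "subst \<tau> (Ng s) = Ng (subst \<tau> s)"

lemma eval_subst: "eval A \<sigma> (subst \<tau> t) = eval A (\<lambda>i. eval A \<sigma> (\<tau> i)) t"
  by (induct t) auto

lemma bnd_subst: "(\<And>i. bnd m (\<tau> i)) \<Longrightarrow> bnd m (subst \<tau> t)"
  by (induct t) auto

definition eqK :: "'a pdm set \<Rightarrow> tm \<Rightarrow> tm \<Rightarrow> bool" where
  "eqK K s t \<longleftrightarrow> (\<forall>A\<in>K. sat A s t)"

lemma eqK_refl: "eqK K t t" by (simp add: eqK_def sat_def)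
lemma eqK_sym: "eqK K s t \<Longrightarrow> eqK K t s" by (simp add: eqK_def sat_def)
lemma eqK_trans: "eqK K s t \<Longrightarrow> eqK K t u \<Longrightarrow> eqK K s u" by (simp add: eqK_def sat_def)
lemma eqK_Mt: "eqK K s s' \<Longrightarrow> eqK K t t' \<Longrightarrow> eqK K (Mt s t) (Mt s' t')" by (simp add: eqK_def sat_def)
lemma eqK_Jn: "eqK K s s' \<Longrightarrow> eqK K t t' \<Longrightarrow> eqK K (Jn s t) (Jn s' t')" by (simp add: eqK_def sat_def)
lemma eqK_Pc: "eqK K s s' \<Longrightarrow> eqK K (Pc s) (Pc s')" by (simp add: eqK_def sat_def)
lemma eqK_Ng: "eqK K s s' \<Longrightarrow> eqK K (Ng s) (Ng s')" by (simp add: eqK_def sat_def)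

definition canon :: "'a pdm set \<Rightarrow> tm \<Rightarrow> tm" where
  "canon K t = (SOME u. eqK K u t)"

lemma canon_eq: "eqK K (canon K t) t"
  unfolding canon_def by (rule someI[of _ t]) (rule eqK_refl)

lemma canon_cong: "eqK K s t \<Longrightarrow> canon K s = canon K t"
proof -
  assume st: "eqK K s t"
  have "(\<lambda>u. eqK K u s) = (\<lambda>u. eqK K u t)"
    using st eqK_trans eqK_sym by (intro ext iffI) blast+
  thus ?thesis unfolding canon_def by simp
qed

definition cl :: "'a pdm set \<Rightarrow> tm \<Rightarrow> nat" where
  "cl K t = to_nat (canon K t)"

lemma dec_cl[simp]: "from_nat (cl K t) = canon K t"
  by (simp add: cl_def)

lemma cl_eq_iff: "cl K s = cl K t \<longleftrightarrow> eqK K s t"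
proof
  assume "cl K s = cl K t"
  hence "canon K s = canon K t" unfolding cl_def by simp
  thus "eqK K s t" using canon_eq[of K s] canon_eq[of K t] eqK_sym eqK_trans by metis
next
  assume "eqK K s t" thus "cl K s = cl K t" unfolding cl_def using canon_cong by metis
qed

definition FA :: "'a pdm set \<Rightarrow> nat \<Rightarrow> nat pdm" where
  "FA K m = \<lparr>carrier = cl K ` {t. bnd m t},
     meet = \<lambda>a b. cl K (Mt (from_nat a) (from_nat b)),
     join = \<lambda>a b. cl K (Jn (from_nat a) (from_nat b)),
     pc = \<lambda>a. cl K (Pc (from_nat a)),
     neg = \<lambda>a. cl K (Ng (from_nat a)),
     bot = cl K Bot, top = cl K Top\<rparr>"

lemma FA_simps[simp]:
  "carrier (FA K m) = cl K ` {t. bnd m t}"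
  "meet (FA K m) (cl K s) (cl K t) = cl K (Mt s t)"
  "join (FA K m) (cl K s) (cl K t) = cl K (Jn s t)"
  "pc (FA K m) (cl K s) = cl K (Pc s)"
  "neg (FA K m) (cl K s) = cl K (Ng s)"
  "bot (FA K m) = cl K Bot" "top (FA K m) = cl K Top"
  unfolding FA_def by (simp_all add: cl_eq_iff eqK_Mt eqK_Jn eqK_Pc eqK_Ng canon_eq)

lemma FA_alg: "is_alg (FA K m)"
  unfolding is_alg_def by (auto intro!: imageI)

lemma eval_FA: "(\<And>i. \<sigma> i = cl K (\<tau> i)) \<Longrightarrow> eval (FA K m) \<sigma> t = cl K (subst \<tau> t)"
  by (induct t) simp_all

lemma FA_inV:
  assumes Kh: "\<forall>A\<in>K. M n A"
  shows "in_V K (FA K m)"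
  unfolding in_V_def
proof (intro conjI allI impI)
  show "is_alg (FA K m)" by (rule FA_alg)
  fix s t assume st: "\<forall>A\<in>K. sat A s t"
  show "sat (FA K m) s t" unfolding sat_def
  proof (intro allI impI)
    fix \<sigma> :: "nat \<Rightarrow> nat" assume \<sigma>: "\<forall>i. \<sigma> i \<in> carrier (FA K m)"
    define \<tau> where "\<tau> (i::nat) = (SOME u. bnd m u \<and> \<sigma> i = cl K u)" for i
    have \<tau>: "bnd m (\<tau> i) \<and> \<sigma> i = cl K (\<tau> i)" for i
    proof -
      have "\<exists>u. bnd m u \<and> \<sigma> i = cl K u" using \<sigma> by auto
      thus ?thesis unfolding \<tau>_def by (rule someI_ex)
    qed
    have "eqK K (subst \<tau> s) (subst \<tau> t)"
      unfolding eqK_def sat_def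
    proof (intro ballI allI impI)
      fix A and \<sigma>' :: "nat \<Rightarrow> 'a" assume A: "A \<in> K" and \<sigma>': "\<forall>i. \<sigma>' i \<in> carrier A"
      have isA: "is_alg A" using Kh A by (simp add: M_def)
      have "\<forall>i. eval A \<sigma>' (\<tau> i) \<in> carrier A" using geval[OF isA] \<sigma>' by blast
      hence "eval A (\<lambda>i. eval A \<sigma>' (\<tau> i)) s = eval A (\<lambda>i. eval A \<sigma>' (\<tau> i)) t"
      proof -
        have "sat A s t" using st A by blast
        from this[unfolded sat_def, rule_format, of "\<lambda>i. eval A \<sigma>' (\<tau> i)"]
        show ?thesis using \<open>\<forall>i. eval A \<sigma>' (\<tau> i) \<in> carrier A\<close> by blast
      qed
      thus "eval A \<sigma>' (subst \<tau> s) = eval A \<sigma>' (subst \<tau> t)" by (simp add: eval_subst)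
    qed
    thus "eval (FA K m) \<sigma> s = eval (FA K m) \<sigma> t"
      using eval_FA[of \<sigma> K \<tau> m] \<tau> by (simp add: cl_eq_iff)
  qed
qed

lemma FA_Sg: "Sg (FA K m) ((\<lambda>i. cl K (Var i)) ` {..<m}) = carrier (FA K m)"
proof
  show "Sg (FA K m) ((\<lambda>i. cl K (Var i)) ` {..<m}) \<subseteq> carrier (FA K m)"
  proof
    fix x assume "x \<in> Sg (FA K m) ((\<lambda>i. cl K (Var i)) ` {..<m})"
    thus "x \<in> carrier (FA K m)"
    proof induct
      case (gen x)
      then obtain i where i: "i < m" "x = cl K (Var i)" by blast
      have "bnd m (Var i)" using i by simp
      hence "cl K (Var i) \<in> cl K ` {t. bnd m t}" by blast
      thus ?case using i by simp
    next
      case bot show ?case by (rule gcl(1)[OF FA_alg])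
    next
      case top show ?case by (rule gcl(2)[OF FA_alg])
    next
      case (meet x y) thus ?case using gcl(3)[OF FA_alg] by blast
    next
      case (join x y) thus ?case using gcl(4)[OF FA_alg] by blast
    next
      case (pc x) thus ?case using gcl(5)[OF FA_alg] by blast
    next
      case (neg x) thus ?case using gcl(6)[OF FA_alg] by blast
    qed
  qed
next
  have "bnd m t \<Longrightarrow> cl K t \<in> Sg (FA K m) ((\<lambda>i. cl K (Var i)) ` {..<m})" for t
  proof (induct t)
    case (Var i) thus ?case by (auto intro: Sg.gen)
  next
    case Bot thus ?case using Sg.bot[of "FA K m"] by simp
  next
    case Top thus ?case using Sg.top[of "FA K m"] by simp
  next
    case (Mt s t) thus ?case using Sg.meet[of "cl K s" "FA K m" _ "cl K t"] by simp
  next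
    case (Jn s t) thus ?case using Sg.join[of "cl K s" "FA K m" _ "cl K t"] by simp
  next
    case (Pc s) thus ?case using Sg.pc[of "cl K s" "FA K m"] by simp
  next
    case (Ng s) thus ?case using Sg.neg[of "cl K s" "FA K m"] by simp
  qed
  thus "carrier (FA K m) \<subseteq> Sg (FA K m) ((\<lambda>i. cl K (Var i)) ` {..<m})" by auto
qed

lemma FA_finite:
  assumes Kh: "\<forall>A\<in>K. M n A" and lf: "locally_finite K"
  shows "finite (cl K ` {t. bnd m t})"
proof -
  have "finite (carrier (FA K m))"
    using lf FA_inV[OF Kh] FA_Sg unfolding locally_finite_def
    by (metis (no_types, lifting) Sg.gen finite_imageI finite_lessThan subsetI)
  thus ?thesis by simp
qed



lemma bnd_NS: "bnd m y \<Longrightarrow> bnd m ((NS ^^ k) y)"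
  by (induct k) (simp_all add: NS_def)
lemma bnd_mT: "bnd m y \<Longrightarrow> bnd m (mT k y)"
  by (induct k) (simp_all add: bnd_NS del: funpow.simps)
lemma bnd_FT: "bnd m s \<Longrightarrow> bnd m t \<Longrightarrow> bnd m (FT k s t)"
  by (simp add: FT_def DT_def WT_def PlusT_def bnd_mT)

lemma hom_inv:
  assumes hm: "hom g S B" and bj: "bij_betw g (carrier S) (carrier B)" and isS: "is_alg S"
  shows "hom (inv_into (carrier S) g) B S"
proof -
  let ?f = "inv_into (carrier S) g"
  have inj: "inj_on g (carrier S)" and img: "g ` carrier S = carrier B" using bj by (auto simp: bij_betw_def)
  have fc: "x \<in> carrier B \<Longrightarrow> ?f x \<in> carrier S" for x using img by (metis inv_into_into)
  have gf: "x \<in> carrier B \<Longrightarrow> g (?f x) = x" for x using img by (metis f_inv_into_f)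
  have fg: "a \<in> carrier S \<Longrightarrow> ?f (g a) = a" for a using inj by (rule inv_into_f_f)
  have H: "g (bot S) = bot B" "g (top S) = top B"
    "\<And>x y. x \<in> carrier S \<Longrightarrow> y \<in> carrier S \<Longrightarrow> g (meet S x y) = meet B (g x) (g y)"
    "\<And>x y. x \<in> carrier S \<Longrightarrow> y \<in> carrier S \<Longrightarrow> g (join S x y) = join B (g x) (g y)"
    "\<And>x. x \<in> carrier S \<Longrightarrow> g (pc S x) = pc B (g x)"
    "\<And>x. x \<in> carrier S \<Longrightarrow> g (neg S x) = neg B (g x)"
    using hm unfolding hom_def by auto
  have c: "bot S \<in> carrier S" "top S \<in> carrier S"
    "\<And>x y. x \<in> carrier S \<Longrightarrow> y \<in> carrier S \<Longrightarrow> meet S x y \<in> carrier S"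
    "\<And>x y. x \<in> carrier S \<Longrightarrow> y \<in> carrier S \<Longrightarrow> join S x y \<in> carrier S"
    "\<And>x. x \<in> carrier S \<Longrightarrow> pc S x \<in> carrier S"
    "\<And>x. x \<in> carrier S \<Longrightarrow> neg S x \<in> carrier S"
    using isS unfolding is_alg_def by auto
  show ?thesis unfolding hom_def
  proof (intro conjI ballI)
    show "?f ` carrier B \<subseteq> carrier S" using fc by blast
    show "?f (bot B) = bot S" using fg[OF c(1)] H(1) by simp
    show "?f (top B) = top S" using fg[OF c(2)] H(2) by simp
  next
    fix x y assume x: "x \<in> carrier B" and y: "y \<in> carrier B"
    show "?f (meet B x y) = meet S (?f x) (?f y)"
      using fg[OF c(3)[OF fc[OF x] fc[OF y]]] H(3)[OF fc[OF x] fc[OF y]] gf[OF x] gf[OF y] by simp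
    show "?f (join B x y) = join S (?f x) (?f y)"
      using fg[OF c(4)[OF fc[OF x] fc[OF y]]] H(4)[OF fc[OF x] fc[OF y]] gf[OF x] gf[OF y] by simp
  next
    fix x assume x: "x \<in> carrier B"
    show "?f (pc B x) = pc S (?f x)"
      using fg[OF c(5)[OF fc[OF x]]] H(5)[OF fc[OF x]] gf[OF x] by simp
    show "?f (neg B x) = neg S (?f x)"
      using fg[OF c(6)[OF fc[OF x]]] H(6)[OF fc[OF x]] gf[OF x] by simp
  qed
qed

locale Main2 = Bctx +
  fixes m :: nat and \<beta> :: "nat \<Rightarrow> 'b"
  assumes \<beta>car: "\<forall>i. \<beta> i \<in> carrier B"
    and \<beta>surj: "carrier B \<subseteq> \<beta> ` {..<m}"
    and lf: "locally_finite K"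
begin

definition h where "h t = eval B \<beta> t"

lemma h_simps[simp]: "h (Mt s t) = meet B (h s) (h t)" "h (Pc s) = pc B (h s)"
  "h Top = top B" "h Bot = bot B" "h (FT n s t) = Fsem B n (h s) (h t)"
  by (simp_all add: h_def)

lemma h_car[simp]: "h t \<in> carrier B"
  unfolding h_def using geval[OF isB] \<beta>car by blast

lemma hB: "eqK K s t \<Longrightarrow> h s = h t"
proof -
  assume "eqK K s t"
  hence "sat B s t" using inV by (simp add: in_V_def eqK_def)
  thus ?thesis using \<beta>car unfolding sat_def h_def by blast
qed

lemma Kpc: "A \<in> K \<Longrightarrow> pcdm A n" using Kh by (simp add: pcdm_def)
lemma Ksp: "A \<in> K \<Longrightarrow> spcdm A n" using Kh spcdmI by blast

definition Cl where "Cl = cl K ` {t. bnd m t}"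

lemma Cl_fin: "finite Cl"
  unfolding Cl_def using FA_finite[of K n m] Kh lf by blast

definition good where "good w \<longleftrightarrow> fst w \<in> K \<and> (\<forall>i. snd w i \<in> carrier (fst w))"

definition wit where "wit p = (SOME w. good w \<and>
    eval (fst w) (snd w) (from_nat (fst p)) \<noteq> eval (fst w) (snd w) (from_nat (snd p)))"

definition W where "W = wit ` {p. fst p \<in> Cl \<and> snd p \<in> Cl \<and> fst p \<noteq> snd p}"

lemma W_fin: "finite W"
proof -
  have "{p. fst p \<in> Cl \<and> snd p \<in> Cl \<and> fst p \<noteq> snd p} \<subseteq> Cl \<times> Cl" by auto
  hence "finite {p. fst p \<in> Cl \<and> snd p \<in> Cl \<and> fst p \<noteq> snd p}"
    using Cl_fin finite_subset by blast
  thus ?thesis unfolding W_def by simp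
qed

lemma eval_eqK: "eqK K s t \<Longrightarrow> good w \<Longrightarrow> eval (fst w) (snd w) s = eval (fst w) (snd w) t"
  unfolding eqK_def good_def sat_def by blast

lemma wit_ok: assumes s: "bnd m s" and t: "bnd m t" and ne: "cl K s \<noteq> cl K t"
  shows "good (wit (cl K s, cl K t)) \<and>
     eval (fst (wit (cl K s, cl K t))) (snd (wit (cl K s, cl K t))) s \<noteq>
     eval (fst (wit (cl K s, cl K t))) (snd (wit (cl K s, cl K t))) t"
proof -
  have "\<not> eqK K (canon K s) (canon K t)"
  proof
    assume "eqK K (canon K s) (canon K t)"
    hence "eqK K s t" using canon_eq[of K s] canon_eq[of K t] eqK_sym eqK_trans by metis
    thus False using ne cl_eq_iff by blast
  qed
  then obtain A \<sigma> where A: "A \<in> K" "\<forall>i. \<sigma> i \<in> carrier A"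
      "eval A \<sigma> (canon K s) \<noteq> eval A \<sigma> (canon K t)"
    unfolding eqK_def sat_def by blast
  hence "\<exists>w. good w \<and> eval (fst w) (snd w) (from_nat (cl K s)) \<noteq> eval (fst w) (snd w) (from_nat (cl K t))"
    by (intro exI[of _ "(A, \<sigma>)"]) (simp add: good_def)
  hence "\<exists>w. good w \<and> eval (fst w) (snd w) (from_nat (fst (cl K s, cl K t))) \<noteq>
        eval (fst w) (snd w) (from_nat (snd (cl K s, cl K t)))" by (simp only: fst_conv snd_conv)
  hence "good (wit (cl K s, cl K t)) \<and>
     eval (fst (wit (cl K s, cl K t))) (snd (wit (cl K s, cl K t))) (from_nat (fst (cl K s, cl K t))) \<noteq>
     eval (fst (wit (cl K s, cl K t))) (snd (wit (cl K s, cl K t))) (from_nat (snd (cl K s, cl K t)))"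
    unfolding wit_def by (rule someI_ex)
  hence g: "good (wit (cl K s, cl K t)) \<and>
     eval (fst (wit (cl K s, cl K t))) (snd (wit (cl K s, cl K t))) (canon K s) \<noteq>
     eval (fst (wit (cl K s, cl K t))) (snd (wit (cl K s, cl K t))) (canon K t)"
    by (simp only: fst_conv snd_conv dec_cl simp_thms)
  thus ?thesis using eval_eqK[OF canon_eq[of K s]] eval_eqK[OF canon_eq[of K t]] by metis
qed

lemma W_good: "w \<in> W \<Longrightarrow> good w"
proof -
  assume "w \<in> W"
  then obtain p where p: "fst p \<in> Cl" "snd p \<in> Cl" "fst p \<noteq> snd p" "w = wit p" unfolding W_def by blast
  obtain s t where st: "bnd m s" "bnd m t" "fst p = cl K s" "snd p = cl K t" using p(1,2) unfolding Cl_def by blast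
  have "p = (cl K s, cl K t)" using st by (simp add: prod_eq_iff)
  thus ?thesis using wit_ok[OF st(1,2)] p st by simp
qed

lemma sep: assumes s: "bnd m s" and t: "bnd m t"
  and all: "\<forall>w\<in>W. eval (fst w) (snd w) s = eval (fst w) (snd w) t"
  shows "eqK K s t"
proof (rule ccontr)
  assume "\<not> eqK K s t"
  hence ne: "cl K s \<noteq> cl K t" using cl_eq_iff by blast
  have "wit (cl K s, cl K t) \<in> W" unfolding W_def Cl_def using s t ne by (intro imageI) auto
  thus False using wit_ok[OF s t ne] all by blast
qed

lemma gw: assumes w: "w \<in> W" and s: "bnd m s" and t: "bnd m t"
  and e: "eval (fst w) (snd w) s = eval (fst w) (snd w) t" and ne: "h s \<noteq> h t"
  shows "bnd m (Pc (FT n s t)) \<and> h (Pc (FT n s t)) = top B \<and>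
         eval (fst w) (snd w) (Pc (FT n s t)) = bot (fst w)"
proof -
  have gd: "fst w \<in> K" "\<forall>i. snd w i \<in> carrier (fst w)" using W_good[OF w] by (auto simp: good_def)
  interpret pcdm "fst w" n using Kpc gd by blast
  have a: "eval (fst w) (snd w) t \<in> carrier (fst w)" using geval[OF alg] gd by blast
  have 1: "eval (fst w) (snd w) (Pc (FT n s t)) = bot (fst w)"
    using e a F_self by (simp add: FT_def[symmetric])
  have "Fsem B n (h s) (h t) \<noteq> top B" using B_Ftop ne by auto
  hence "Fsem B n (h s) (h t) = bot B" using B_F01[of "h s" "h t"] by simp
  hence 2: "h (Pc (FT n s t)) = top B" using B_pcbot by simp
  have 3: "bnd m (Pc (FT n s t))" using s t by (simp add: bnd_FT)
  show ?thesis using 1 2 3 by simp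
qed

end


context Main2 begin

lemma big:
  assumes allg: "\<forall>w\<in>W. \<exists>g. bnd m g \<and> h g = top B \<and> eval (fst w) (snd w) g = bot (fst w)"
  shows "finite V \<Longrightarrow> V \<subseteq> W \<Longrightarrow>
    \<exists>G. bnd m G \<and> h G = top B \<and> (\<forall>w\<in>V. eval (fst w) (snd w) G = bot (fst w))"
proof (induct V rule: finite_induct)
  case empty
  show ?case by (intro exI[of _ Top]) simp
next
  case (insert x V)
  then obtain G where G: "bnd m G" "h G = top B" "\<forall>w\<in>V. eval (fst w) (snd w) G = bot (fst w)"
    by blast
  have xW: "x \<in> W" using insert by blast
  obtain g where g: "bnd m g" "h g = top B" "eval (fst x) (snd x) g = bot (fst x)"
    using allg xW by blast
  have "eval (fst w) (snd w) (Mt g G) = bot (fst w)" if w: "w \<in> insert x V" for w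
  proof -
    have wW: "w \<in> W" using w insert by blast
    have gd: "fst w \<in> K" "\<forall>i. snd w i \<in> carrier (fst w)" using W_good[OF wW] by (auto simp: good_def)
    interpret pcdm "fst w" n using Kpc gd by blast
    have c: "eval (fst w) (snd w) g \<in> carrier (fst w)" "eval (fst w) (snd w) G \<in> carrier (fst w)"
      using geval[OF alg] gd by blast+
    show ?thesis
    proof (cases "w = x")
      case True
      hence "eval (fst w) (snd w) g = bot (fst w)" using g by simp
      thus ?thesis using c by simp
    next
      case False hence "w \<in> V" using w by blast
      thus ?thesis using G c by simp
    qed
  qed
  moreover have "h (Mt g G) = top B" using g G B_mtop isB by simp
  moreover have "bnd m (Mt g G)" using g G by simp
  ultimately show ?case by blast
qed

lemma claim: "\<exists>w\<in>W. \<forall>s t. bnd m s \<longrightarrow> bnd m t \<longrightarrow>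
    eval (fst w) (snd w) s = eval (fst w) (snd w) t \<longrightarrow> h s = h t"
proof (rule ccontr)
  assume "\<not> ?thesis"
  hence "\<forall>w\<in>W. \<exists>s t. bnd m s \<and> bnd m t \<and> eval (fst w) (snd w) s = eval (fst w) (snd w) t \<and> h s \<noteq> h t"
    by blast
  hence "\<forall>w\<in>W. \<exists>g. bnd m g \<and> h g = top B \<and> eval (fst w) (snd w) g = bot (fst w)"
    using gw by meson
  then obtain G where G: "bnd m G" "h G = top B" "\<forall>w\<in>W. eval (fst w) (snd w) G = bot (fst w)"
    using big W_fin by blast
  have "\<forall>w\<in>W. eval (fst w) (snd w) G = eval (fst w) (snd w) Bot" using G by simp
  hence "eqK K G Bot" using sep G by simp
  hence "h G = h Bot" by (rule hB)
  thus False using G B_nontriv by simp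
qed

lemma final: "\<exists>A\<in>K. \<exists>S. subalg S A \<and> isomorphic B S"
proof -
  obtain w where wW: "w \<in> W" and P: "\<forall>s t. bnd m s \<longrightarrow> bnd m t \<longrightarrow>
    eval (fst w) (snd w) s = eval (fst w) (snd w) t \<longrightarrow> h s = h t" using claim by blast
  define A where "A = fst w"
  define \<sigma> where "\<sigma> = snd w"
  have gd: "A \<in> K" "\<forall>i. \<sigma> i \<in> carrier A" using W_good[OF wW] by (auto simp: good_def A_def \<sigma>_def)
  have P': "\<And>s t. bnd m s \<Longrightarrow> bnd m t \<Longrightarrow> eval A \<sigma> s = eval A \<sigma> t \<Longrightarrow> h s = h t"
    using P unfolding A_def \<sigma>_def by blast
  interpret spcdm A n using Ksp gd by blast
  have ev: "eval A \<sigma> t \<in> carrier A" for t using geval[OF alg] gd by blast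
  define S :: "'a pdm" where "S = \<lparr>carrier = eval A \<sigma> ` {t. bnd m t}, meet = meet A, join = join A,
     pc = pc A, neg = neg A, bot = bot A, top = top A\<rparr>"
  have S_simps: "carrier S = eval A \<sigma> ` {t. bnd m t}" "meet S = meet A" "join S = join A"
     "pc S = pc A" "neg S = neg A" "bot S = bot A" "top S = top A" unfolding S_def by simp_all
  have inS: "x \<in> carrier S \<longleftrightarrow> (\<exists>t. bnd m t \<and> x = eval A \<sigma> t)" for x
    unfolding S_simps by blast
  have inS': "bnd m t \<Longrightarrow> eval A \<sigma> t \<in> carrier S" for t using inS by blast
  have isS: "is_alg S" unfolding is_alg_def
  proof (intro conjI ballI)
    show "bot S \<in> carrier S" using inS'[of Bot] S_simps by simp
    show "top S \<in> carrier S" using inS'[of Top] S_simps by simp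
  next
    fix x y assume "x \<in> carrier S" "y \<in> carrier S"
    then obtain s t where st: "bnd m s" "bnd m t" "x = eval A \<sigma> s" "y = eval A \<sigma> t" using inS by blast
    show "meet S x y \<in> carrier S" using inS'[of "Mt s t"] st S_simps by simp
    show "join S x y \<in> carrier S" using inS'[of "Jn s t"] st S_simps by simp
  next
    fix x assume "x \<in> carrier S"
    then obtain s where st: "bnd m s" "x = eval A \<sigma> s" using inS by blast
    show "pc S x \<in> carrier S" using inS'[of "Pc s"] st S_simps by simp
    show "neg S x \<in> carrier S" using inS'[of "Ng s"] st S_simps by simp
  qed
  have sub: "subalg S A" unfolding subalg_def using isS S_simps ev by auto
  define gg where "gg a = h (SOME t. bnd m t \<and> eval A \<sigma> t = a)" for a
  have gg_eval: "gg (eval A \<sigma> t) = h t" if t: "bnd m t" for t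
  proof -
    have "\<exists>u. bnd m u \<and> eval A \<sigma> u = eval A \<sigma> t" using t by blast
    hence "bnd m (SOME u. bnd m u \<and> eval A \<sigma> u = eval A \<sigma> t) \<and>
           eval A \<sigma> (SOME u. bnd m u \<and> eval A \<sigma> u = eval A \<sigma> t) = eval A \<sigma> t" by (rule someI_ex)
    thus ?thesis unfolding gg_def using P' t by blast
  qed
  have hm: "hom gg S B" unfolding hom_def
  proof (intro conjI ballI)
    show "gg ` carrier S \<subseteq> carrier B" unfolding gg_def by auto
    show "gg (bot S) = bot B" using gg_eval[of Bot] S_simps by simp
    show "gg (top S) = top B" using gg_eval[of Top] S_simps by simp
  next
    fix x y assume "x \<in> carrier S" "y \<in> carrier S"
    then obtain s t where st: "bnd m s" "bnd m t" "x = eval A \<sigma> s" "y = eval A \<sigma> t" using inS by blast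
    show "gg (meet S x y) = meet B (gg x) (gg y)" using gg_eval[of "Mt s t"] gg_eval st S_simps by simp
    show "gg (join S x y) = join B (gg x) (gg y)" using gg_eval[of "Jn s t"] gg_eval st S_simps
      by (simp add: h_def)
  next
    fix x assume "x \<in> carrier S"
    then obtain s where st: "bnd m s" "x = eval A \<sigma> s" using inS by blast
    show "gg (pc S x) = pc B (gg x)" using gg_eval[of "Pc s"] gg_eval st S_simps by simp
    show "gg (neg S x) = neg B (gg x)" using gg_eval[of "Ng s"] gg_eval st S_simps by (simp add: h_def)
  qed
  have inj: "inj_on gg (carrier S)"
  proof (rule inj_onI)
    fix x y assume "x \<in> carrier S" "y \<in> carrier S" and e: "gg x = gg y"
    then obtain s t where st: "bnd m s" "bnd m t" "x = eval A \<sigma> s" "y = eval A \<sigma> t" using inS by blast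
    have hst: "h s = h t" using e st gg_eval by simp
    have u: "bnd m (FT n s t)" using st bnd_FT by blast
    have hu: "h (FT n s t) = top B" using hst B_Fself by simp
    have "Fsem A n x y = bot A \<or> Fsem A n x y = top A" using F01 st ev by simp
    moreover have "Fsem A n x y \<noteq> bot A"
    proof
      assume "Fsem A n x y = bot A"
      hence e2: "eval A \<sigma> (FT n s t) = eval A \<sigma> Bot" using st by simp
      have "bnd m Bot" by simp
      hence "h (FT n s t) = h Bot" using P'[OF u _ e2] by blast
      thus False using hu B_nontriv by simp
    qed
    ultimately have "Fsem A n x y = top A" by blast
    thus "x = y" using F_top st ev by blast
  qed
  have img: "gg ` carrier S = carrier B"
  proof
    show "gg ` carrier S \<subseteq> carrier B" using hm by (simp add: hom_def)
    show "carrier B \<subseteq> gg ` carrier S"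
    proof
      fix b assume "b \<in> carrier B"
      then obtain i where i: "i < m" "b = \<beta> i" using \<beta>surj by blast
      have "gg (eval A \<sigma> (Var i)) = b" using gg_eval[of "Var i"] i by (simp add: h_def)
      moreover have "eval A \<sigma> (Var i) \<in> carrier S" using inS'[of "Var i"] i by simp
      ultimately show "b \<in> gg ` carrier S" by blast
    qed
  qed
  have bj: "bij_betw gg (carrier S) (carrier B)" using inj img by (simp add: bij_betw_def)
  have "isomorphic B S" unfolding isomorphic_def
    using hom_inv[OF hm bj isS] bij_betw_inv_into[OF bj] by blast
  thus ?thesis using sub gd by blast
qed

end

theorem theorem5p1:
  fixes n :: nat and K :: "'a pdm set"
  assumes "\<forall>A\<in>K. simple A \<and> M n A"
    and "locally_finite K"
  shows "\<forall>B :: 'b pdm. in_V K B \<and> simple B \<and> finite (carrier B) \<longrightarrow>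
           (\<exists>A\<in>K. \<exists>S. subalg S A \<and> isomorphic B S)"
proof (intro allI impI)
  fix B :: "'b pdm"
  assume h: "in_V K B \<and> simple B \<and> finite (carrier B)"
  interpret Bctx K n B using assms(1) h by (simp add: Bctx_def)
  obtain m :: nat and f :: "nat \<Rightarrow> 'b" where mf: "carrier B = f ` {i. i < m}"
    using finite_imp_nat_seg_image_inj_on[of "carrier B"] h by blast
  define \<beta> where "\<beta> i = (if i < m then f i else top B)" for i
  have bc: "\<forall>i. \<beta> i \<in> carrier B"
  proof
    fix i show "\<beta> i \<in> carrier B"
    proof (cases "i < m")
      case True thus ?thesis unfolding \<beta>_def mf by simp
    next
      case False thus ?thesis unfolding \<beta>_def using gcl(2)[OF isB] by simp
    qed
  qed
  have bs: "carrier B \<subseteq> \<beta> ` {..<m}"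
  proof
    fix b assume "b \<in> carrier B"
    then obtain i where i: "i < m" "b = f i" using mf by blast
    hence "b = \<beta> i" unfolding \<beta>_def by simp
    thus "b \<in> \<beta> ` {..<m}" using i by blast
  qed
  interpret Main2 K n B m \<beta> using bc bs assms(2) by unfold_locales blast+
  show "\<exists>A\<in>K. \<exists>S. subalg S A \<and> isomorphic B S" by (rule final)
qed


end
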